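(* Fix $0<\delta<\tfrac12$ and $0<\lambda\le 1\le\Lambda$. Let $\Omega\subset\mathbb H^n$ be open, let $A\in M_n(\lambda,\Lambda,\Omega)$ be continuous at a point $z_0\in\Omega$, and assume the matrix $M:=A(z_0)$ is symplectic. Let $\alpha=\frac{Q-2}{4}+\delta$ and $g(\zeta)=-\frac1\alpha\phi_M(\zeta)^{-\alpha}$ for $\zeta\ne0$. Then there exists $\epsilon_0>0$, depending only on $\lambda,\Lambda,Q,\delta$ and the function $\epsilon\mapsto\omega_A(z_0;\epsilon)$, such that $$-\mathrm{tr}\big(A(z)\,(D^2_{\mathbb H}g)(\zeta)\big)\ge0\qquad\text{for all }z\in B_{\epsilon_0}(z_0)\cap\Omega\text{ and all }\zeta\neq0.$$ If in addition $A\in C(\Omega,\omega)$ for a function $\omega$ as below, then $\epsilon_0$ can be chosen depending only on $\lambda,\Lambda,Q,\delta,\omega$ (independent of $z_0$ and $A$).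
   Context: Points are $z=(x,t)$, $\zeta=(\xi,\tau)\in\mathbb R^{2n+1}$. $J=\begin{pmatrix}0&-\mathbb I_n\\ \mathbb I_n&0\end{pmatrix}$, $Q=2n+2$. The Heisenberg group $\mathbb H^n$ is $\mathbb R^{2n+1}$ with $(x,t)\circ(\xi,\tau)=(x+\xi,t+\tau+2\langle Jx,\xi\rangle)$; $\rho(x,t)=(|x|^4+t^2)^{1/4}$, $d(z,\zeta)=\rho(z^{-1}\circ\zeta)$ with $(x,t)^{-1}=(-x,-t)$, and $B_R(z)=\{\zeta:d(z,\zeta)<R\}$. $X_i=\partial_{x_i}+2(Jx)_i\partial_t$, $D^2_{\mathbb H}\psi=\big(\tfrac12(X_iX_j+X_jX_i)\psi\big)_{i,j=1}^{2n}$. $M_n(\lambda,\Lambda,\Omega)$ is the set of symmetric matrix-valued functions $A$ on $\Omega$ with $\det A(z)=1$ and $\lambda\mathbb I_{2n}\le A(z)\le\Lambda\mathbb I_{2n}$ for all $z\in\Omega$. A matrix $M$ is symplectic if $M^{-1}=J^tMJ$. For symmetric positive definite constant $M$, $\phi_M(x,t)=\langle M^{-1}x,x\rangle^2+t^2$. The modulus of continuity is $\omega_A(z_0;\epsilon)=\sup_{z\in B_\epsilon(z_0)\cap\Omega}\|A(z)-A(z_0)\|$ (operator norm). Given a nondecreasing $\omega:[0,1)\to[0,1)$ with $\omega(0)=\lim_{s\to0^+}\omega(s)=0$, $C(\Omega,\omega)$ is the set of continuous matrix functions $A$ on $\Omega$ with $\omega_A(z_0;\epsilon)\le\omega(\epsilon)$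 for all $z_0\in\Omega$, $0<\epsilon<1$. *)

theory Defs
  imports "HOL-Analysis.Analysis"
begin

text \<open>Horizontal coordinates x in R^{2n} are vectors indexed by 'n + 'n
  (Inl k = first block, Inr k = second block), n = CARD('n).
  Points of H^n are pairs (x,t).\<close>

type_synonym 'n hpoint = "(real^('n + 'n)) \<times> real"
type_synonym 'n hmat = "real^('n + 'n)^('n + 'n)"

definition Jmat :: "'n::finite hmat" where
  "Jmat = (\<chi> i j. (case (i, j) of
      (Inl k, Inr l) \<Rightarrow> (if k = l then -1 else 0)
    | (Inr k, Inl l) \<Rightarrow> (if k = l then 1 else 0)
    | _ \<Rightarrow> 0))"

definition Qdim :: "'n::finite itself \<Rightarrow> real" where
  "Qdim _ = 2 * real CARD('n) + 2"

definition hmult :: "'n::finite hpoint \<Rightarrow> 'n hpoint \<Rightarrow> 'n hpoint" where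
  "hmult z w = (fst z + fst w, snd z + snd w + 2 * ((Jmat *v fst z) \<bullet> fst w))"

definition hinv :: "'n::finite hpoint \<Rightarrow> 'n hpoint" where
  "hinv z = (- fst z, - snd z)"

definition hgauge :: "'n::finite hpoint \<Rightarrow> real" where
  "hgauge z = (norm (fst z) ^ 4 + (snd z)^2) powr (1/4)"

definition hdist :: "'n::finite hpoint \<Rightarrow> 'n hpoint \<Rightarrow> real" where
  "hdist z w = hgauge (hmult (hinv z) w)"

definition hball :: "'n::finite hpoint \<Rightarrow> real \<Rightarrow> 'n hpoint set" where
  "hball z R = {w. hdist z w < R}"

text \<open>Vector field X_i = d/dx_i + 2 (Jx)_i d/dt, applied to psi, as the
  directional derivative along (e_i, 2 (Jx)_i).\<close>
definition Xfield :: "('n::finite + 'n) \<Rightarrow> ('n hpoint \<Rightarrow> real) \<Rightarrow> 'n hpoint \<Rightarrow> real" where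
  "Xfield i psi z = deriv (\<lambda>s. psi (z + s *\<^sub>R (axis i 1, 2 * ((Jmat *v fst z) $ i)))) 0"

definition hhess :: "('n::finite hpoint \<Rightarrow> real) \<Rightarrow> 'n hpoint \<Rightarrow> 'n hmat" where
  "hhess psi z = (\<chi> i j. (1/2) * (Xfield i (Xfield j psi) z + Xfield j (Xfield i psi) z))"

definition Mclass :: "real \<Rightarrow> real \<Rightarrow> 'n::finite hpoint set \<Rightarrow> ('n hpoint \<Rightarrow> 'n hmat) \<Rightarrow> bool" where
  "Mclass lam Lam \<Omega> A \<longleftrightarrow> (\<forall>z\<in>\<Omega>. transpose (A z) = A z \<and> det (A z) = 1 \<and>
      (\<forall>v. lam * (v \<bullet> v) \<le> v \<bullet> (A z *v v) \<and> v \<bullet> (A z *v v) \<le> Lam * (v \<bullet> v)))"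

definition symplectic :: "'n::finite hmat \<Rightarrow> bool" where
  "symplectic M \<longleftrightarrow> invertible M \<and> matrix_inv M = transpose Jmat ** M ** Jmat"

definition phiM :: "'n::finite hmat \<Rightarrow> 'n hpoint \<Rightarrow> real" where
  "phiM M z = ((matrix_inv M *v fst z) \<bullet> fst z)^2 + (snd z)^2"

definition modcont :: "('n::finite hpoint \<Rightarrow> 'n hmat) \<Rightarrow> 'n hpoint set \<Rightarrow> 'n hpoint \<Rightarrow> real \<Rightarrow> real" where
  "modcont A \<Omega> z0 e = (SUP z \<in> hball z0 e \<inter> \<Omega>. onorm (\<lambda>v. (A z - A z0) *v v))"

definition admissible_modulus :: "(real \<Rightarrow> real) \<Rightarrow> bool" where
  "admissible_modulus w \<longleftrightarrow> mono_on {0..<1} w \<and> w ` {0..<1} \<subseteq> {0..<1} \<and> w 0 = 0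
     \<and> (w \<longlongrightarrow> 0) (at_right 0)"

definition Cclass :: "'n::finite hpoint set \<Rightarrow> (real \<Rightarrow> real) \<Rightarrow> ('n hpoint \<Rightarrow> 'n hmat) \<Rightarrow> bool" where
  "Cclass \<Omega> w A \<longleftrightarrow> continuous_on \<Omega> A \<and>
     (\<forall>z0\<in>\<Omega>. \<forall>e. 0 < e \<and> e < 1 \<longrightarrow> modcont A \<Omega> z0 e \<le> w e)"

end

theory Submission
  imports Defs
begin


lemma sum_UNIV_Plus:
  "(\<Sum>i\<in>(UNIV::('a::finite+'b::finite) set). g i) = (\<Sum>k\<in>UNIV. g (Inl k)) + (\<Sum>k\<in>UNIV. g (Inr k))"
  using sum.Plus[of "UNIV::'a set" "UNIV::'b set" g] by (simp add: comp_def)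

lemma if_mult_delta: "(\<Sum>ka\<in>UNIV. (if k = ka then c else 0) * (y ka::real)) = c * y k" for k :: "'a::finite"
proof -
  have "(\<Sum>ka\<in>UNIV. (if k = ka then c else 0) * y ka) = (\<Sum>ka\<in>UNIV. if k = ka then c * y ka else 0)"
    by (rule sum.cong) auto
  thus ?thesis by (simp add: sum.delta sum.delta')
qed

lemma J_Inl: "(Jmat *v x) $ Inl k = - x $ Inr k"
  by (simp add: matrix_vector_mult_def Jmat_def sum_UNIV_Plus if_mult_delta cong: if_cong)

lemma J_Inr: "(Jmat *v x) $ Inr k = x $ Inl k"
  by (simp add: matrix_vector_mult_def Jmat_def sum_UNIV_Plus if_mult_delta cong: if_cong)

lemma J_antisym: "(Jmat :: 'n::finite hmat) $ i $ j + Jmat $ j $ i = 0"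
  by (cases i; cases j) (auto simp: Jmat_def)

lemma J_orth: "x \<bullet> (Jmat *v x) = 0"
  by (simp add: inner_vec_def sum_UNIV_Plus J_Inl J_Inr sum_negf mult.commute)

lemma J_norm: "norm (Jmat *v x) = norm x"
proof -
  have "(Jmat *v x) \<bullet> (Jmat *v x) = x \<bullet> x"
    by (simp add: inner_vec_def sum_UNIV_Plus J_Inl J_Inr add.commute)
  thus ?thesis by (simp add: norm_eq_sqrt_inner)
qed



lemma sym_inner:
  fixes A :: "real^'m^'m"
  assumes "transpose A = A"
  shows "v \<bullet> (A *v w) = (A *v v) \<bullet> w"
proof -
  have "v \<bullet> (A *v w) = (v v* A) \<bullet> w" by (simp add: dot_lmul_matrix)
  also have "v v* A = transpose A *v v" by simp
  finally show ?thesis using assms by simp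
qed

lemma psd_norm_bound:
  fixes A :: "real^'m^'m"
  assumes sym: "transpose A = A" and pos: "\<forall>v. 0 \<le> v \<bullet> (A *v v)"
    and up: "\<forall>v. v \<bullet> (A *v v) \<le> L * (v \<bullet> v)" and L: "L > 0"
  shows "norm (A *v v) \<le> L * norm v"
proof -
  define w where "w = A *v v"
  define t where "t = 1 / L"
  have e: "(v - t *\<^sub>R w) \<bullet> (A *v (v - t *\<^sub>R w)) = v \<bullet> (A *v v) - 2 * t * (w \<bullet> w) + t^2 * (w \<bullet> (A *v w))"
    using sym_inner[OF sym, of v w] sym_inner[OF sym, of w v]
    by (simp add: matrix_vector_right_distrib matrix_vector_mult_diff_distrib inner_diff_left inner_diff_right
        inner_commute w_def power2_eq_square algebra_simps)
  have "0 \<le> v \<bullet> (A *v v) - 2 * t * (w \<bullet> w) + t^2 * (w \<bullet> (A *v w))"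
    using pos e by metis
  moreover have "w \<bullet> (A *v w) \<le> L * (w \<bullet> w)" using up by blast
  moreover have "v \<bullet> (A *v v) \<le> L * (v \<bullet> v)" using up by blast
  ultimately have "2 * t * (w \<bullet> w) \<le> L * (v \<bullet> v) + t^2 * (L * (w \<bullet> w))"
    by (smt (verit, best) mult_left_mono zero_le_power2)
  hence "2 / L * (w \<bullet> w) \<le> L * (v \<bullet> v) + (1 / L) * (w \<bullet> w)"
    using L by (simp add: t_def power2_eq_square field_simps)
  hence "(w \<bullet> w) \<le> L^2 * (v \<bullet> v)"
    using L by (simp add: field_simps power2_eq_square)
  hence "norm w ^2 \<le> (L * norm v)^2"
    by (simp add: power2_norm_eq_inner power_mult_distrib)
  thus ?thesis unfolding w_def using L by (simp add: power2_le_iff_abs_le)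
qed

lemma inv_props:
  fixes M :: "real^'m^'m"
  assumes "invertible M"
  shows "M ** matrix_inv M = mat 1" "matrix_inv M ** M = mat 1"
proof -
  have "\<exists>A'. M ** A' = mat 1 \<and> A' ** M = mat 1" using assms by (simp add: invertible_def)
  hence "M ** matrix_inv M = mat 1 \<and> matrix_inv M ** M = mat 1"
    unfolding matrix_inv_def by (rule someI_ex)
  thus "M ** matrix_inv M = mat 1" "matrix_inv M ** M = mat 1" by auto
qed

lemma inv_sym:
  fixes M :: "real^'m^'m"
  assumes "invertible M" "transpose M = M"
  shows "transpose (matrix_inv M) = matrix_inv M"
proof -
  let ?N = "matrix_inv M"
  have "transpose ?N ** M = mat 1"
    using inv_props(1)[OF assms(1)] assms(2)
    by (metis matrix_transpose_mul transpose_mat)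
  hence "transpose ?N = transpose ?N ** (M ** ?N)" using inv_props(1)[OF assms(1)] by simp
  also have "\<dots> = ?N" using \<open>transpose ?N ** M = mat 1\<close> by (simp add: matrix_mul_assoc)
  finally show ?thesis .
qed



definition phiN :: "'n::finite hmat \<Rightarrow> 'n hpoint \<Rightarrow> real" where
  "phiN N z = ((N *v fst z) \<bullet> fst z)^2 + (snd z)^2"

definition gN :: "real \<Rightarrow> 'n::finite hmat \<Rightarrow> 'n hpoint \<Rightarrow> real" where
  "gN al N z = - (1/al) * phiN N z powr (- al)"

lemma line_u:
  fixes N :: "real^'m^'m"
  shows "(N *v (x + s *\<^sub>R e)) \<bullet> (x + s *\<^sub>R e) =
    (N *v x) \<bullet> x + s * ((N *v e) \<bullet> x + (N *v x) \<bullet> e) + s^2 * ((N *v e) \<bullet> e)"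
  by (simp add: matrix_vector_right_distrib inner_add_left inner_add_right
      matrix_vector_mult_scaleR power2_eq_square algebra_simps)

lemma Xfield_line:
  "Xfield i f (x, t) = deriv (\<lambda>s. f (x + s *\<^sub>R axis i 1, t + s * (2 * (Jmat *v x) $ i))) 0"
  by (simp add: Xfield_def algebra_simps)

lemma phiN_line:
  "phiN N (x + s *\<^sub>R e, t + s * c) =
    ((N *v x) \<bullet> x + s * ((N *v e) \<bullet> x + (N *v x) \<bullet> e) + s^2 * ((N *v e) \<bullet> e))^2 + (t + s * c)^2"
  by (simp add: phiN_def line_u)

lemma X1:
  fixes N :: "'n::finite hmat"
  assumes sym: "transpose N = N" and pos: "phiN N (x, t) > 0" and al: "al > 0"
  shows "Xfield j (gN al N) (x, t) = phiN N (x, t) powr (- al - 1) *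
      (4 * ((N *v x) \<bullet> x) * (N *v x) $ j + 4 * t * (Jmat *v x) $ j)"
proof -
  let ?e = "axis j 1 :: real^('n+'n)"
  let ?c = "2 * (Jmat *v x) $ j"
  define P where "P s = ((N *v x) \<bullet> x + s * ((N *v ?e) \<bullet> x + (N *v x) \<bullet> ?e) + s^2 * ((N *v ?e) \<bullet> ?e))^2 + (t + s * ?c)^2" for s
  have P0: "P 0 = phiN N (x, t)" by (simp add: P_def phiN_def)
  have eq: "(\<lambda>s. gN al N (x + s *\<^sub>R ?e, t + s * ?c)) = (\<lambda>s. - (1/al) * P s powr (- al))"
    by (simp add: gN_def phiN_line P_def)
  have dP: "(P has_real_derivative (2 * ((N *v x) \<bullet> x) * ((N *v ?e) \<bullet> x + (N *v x) \<bullet> ?e) + 2 * t * ?c)) (at 0)"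
    unfolding P_def by (auto intro!: derivative_eq_intros)
  have "((\<lambda>s. - (1/al) * P s powr (- al)) has_real_derivative
     - (1/al) * ((- al) * P 0 powr (- al - 1) * (2 * ((N *v x) \<bullet> x) * ((N *v ?e) \<bullet> x + (N *v x) \<bullet> ?e) + 2 * t * ?c))) (at 0)"
    using pos P0 by (auto intro!: derivative_eq_intros dP)
  hence "Xfield j (gN al N) (x, t) = - (1/al) * ((- al) * P 0 powr (- al - 1) * (2 * ((N *v x) \<bullet> x) * ((N *v ?e) \<bullet> x + (N *v x) \<bullet> ?e) + 2 * t * ?c))"
    unfolding Xfield_line eq by (rule DERIV_imp_deriv)
  moreover have "(N *v ?e) \<bullet> x = (N *v x) $ j" "(N *v x) \<bullet> ?e = (N *v x) $ j"
    using sym_inner[OF sym, of x ?e] by (auto simp: inner_axis inner_axis' inner_commute)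
  moreover have "\<And>y. - (1/al) * ((- al) * y) = y" using al by simp
  ultimately show ?thesis using P0 by (simp add: algebra_simps)
qed



lemma Nv_line: "(N *v (x + s *\<^sub>R e)) $ j = (N *v x) $ j + s * (N *v e) $ j"
  by (simp add: matrix_vector_right_distrib matrix_vector_mult_scaleR)

lemma X2:
  fixes N :: "'n::finite hmat"
  assumes sym: "transpose N = N" and pos: "phiN N (x, t) > 0" and al: "al > 0"
  shows "Xfield i (Xfield j (gN al N)) (x, t) =
     (- al - 1) * phiN N (x, t) powr (- al - 2) *
        (4 * ((N *v x) \<bullet> x) * (N *v x) $ i + 4 * t * (Jmat *v x) $ i) *
        (4 * ((N *v x) \<bullet> x) * (N *v x) $ j + 4 * t * (Jmat *v x) $ j)
   + phiN N (x, t) powr (- al - 1) *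
       (8 * (N *v x) $ i * (N *v x) $ j + 4 * ((N *v x) \<bullet> x) * (N *v axis i 1) $ j
        + 8 * (Jmat *v x) $ i * (Jmat *v x) $ j + 4 * t * (Jmat *v axis i 1) $ j)"
proof -
  let ?e = "axis i 1 :: real^('n+'n)"
  let ?c = "2 * (Jmat *v x) $ i"
  define U where "U s = (N *v x) \<bullet> x + s * ((N *v ?e) \<bullet> x + (N *v x) \<bullet> ?e) + s^2 * ((N *v ?e) \<bullet> ?e)" for s
  define P where "P s = (U s)^2 + (t + s * ?c)^2" for s
  define G where "G s = P s powr (- al - 1) * (4 * U s * ((N *v x) $ j + s * (N *v ?e) $ j)
      + 4 * (t + s * ?c) * ((Jmat *v x) $ j + s * (Jmat *v ?e) $ j))" for s
  have P0: "P 0 = phiN N (x, t)" by (simp add: P_def U_def phiN_def)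
  have U0: "U 0 = (N *v x) \<bullet> x" by (simp add: U_def)
  have cP: "continuous_on UNIV P" unfolding P_def U_def by (intro continuous_intros)
  let ?S = "{s. 0 < P s}"
  have oS: "open ?S" using open_Collect_less[OF continuous_on_const cP] by simp
  have S0: "0 \<in> ?S" using pos P0 by simp
  have eqS: "Xfield j (gN al N) (x + s *\<^sub>R ?e, t + s * ?c) = G s" if "s \<in> ?S" for s
  proof -
    have php: "phiN N (x + s *\<^sub>R ?e, t + s * ?c) = P s"
      by (simp add: phiN_line P_def U_def)
    have "Xfield j (gN al N) (x + s *\<^sub>R ?e, t + s * ?c) = P s powr (- al - 1) *
      (4 * ((N *v (x + s *\<^sub>R ?e)) \<bullet> (x + s *\<^sub>R ?e)) * (N *v (x + s *\<^sub>R ?e)) $ j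
        + 4 * (t + s * ?c) * (Jmat *v (x + s *\<^sub>R ?e)) $ j)"
      using X1[OF sym _ al, of "x + s *\<^sub>R ?e" "t + s * ?c" j] that php by simp
    thus ?thesis by (simp add: G_def line_u U_def Nv_line)
  qed
  have dU: "(U has_real_derivative ((N *v ?e) \<bullet> x + (N *v x) \<bullet> ?e)) (at 0)"
    unfolding U_def by (auto intro!: derivative_eq_intros)
  have dP: "(P has_real_derivative (2 * U 0 * ((N *v ?e) \<bullet> x + (N *v x) \<bullet> ?e) + 2 * t * ?c)) (at 0)"
    unfolding P_def by (auto intro!: derivative_eq_intros dU)
  have dG: "(G has_real_derivative
      ((- al - 1) * P 0 powr (- al - 1 - 1) * (2 * U 0 * ((N *v ?e) \<bullet> x + (N *v x) \<bullet> ?e) + 2 * t * ?c))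
        * (4 * U 0 * (N *v x) $ j + 4 * t * (Jmat *v x) $ j)
      + P 0 powr (- al - 1) * (4 * ((N *v ?e) \<bullet> x + (N *v x) \<bullet> ?e) * (N *v x) $ j + 4 * U 0 * (N *v ?e) $ j
         + 4 * ?c * (Jmat *v x) $ j + 4 * t * (Jmat *v ?e) $ j)) (at 0)"
    unfolding G_def using pos P0
    by (auto intro!: derivative_eq_intros dU dP simp: algebra_simps)
  have dG': "((\<lambda>s. Xfield j (gN al N) (x + s *\<^sub>R ?e, t + s * ?c)) has_real_derivative
      ((- al - 1) * P 0 powr (- al - 1 - 1) * (2 * U 0 * ((N *v ?e) \<bullet> x + (N *v x) \<bullet> ?e) + 2 * t * ?c))
        * (4 * U 0 * (N *v x) $ j + 4 * t * (Jmat *v x) $ j)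
      + P 0 powr (- al - 1) * (4 * ((N *v ?e) \<bullet> x + (N *v x) \<bullet> ?e) * (N *v x) $ j + 4 * U 0 * (N *v ?e) $ j
         + 4 * ?c * (Jmat *v x) $ j + 4 * t * (Jmat *v ?e) $ j)) (at 0)"
    by (rule has_field_derivative_transform_within_open[OF dG oS S0]) (simp add: eqS)
  have ax: "(N *v ?e) \<bullet> x = (N *v x) $ i" "(N *v x) \<bullet> ?e = (N *v x) $ i"
    using sym_inner[OF sym, of x ?e] by (auto simp: inner_axis inner_axis' inner_commute)
  have "Xfield i (Xfield j (gN al N)) (x, t) = ((- al - 1) * P 0 powr (- al - 1 - 1) * (2 * U 0 * ((N *v ?e) \<bullet> x + (N *v x) \<bullet> ?e) + 2 * t * ?c))
        * (4 * U 0 * (N *v x) $ j + 4 * t * (Jmat *v x) $ j)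
      + P 0 powr (- al - 1) * (4 * ((N *v ?e) \<bullet> x + (N *v x) \<bullet> ?e) * (N *v x) $ j + 4 * U 0 * (N *v ?e) $ j
         + 4 * ?c * (Jmat *v x) $ j + 4 * t * (Jmat *v ?e) $ j)"
    unfolding Xfield_line[of i "Xfield j (gN al N)" x t] by (rule DERIV_imp_deriv[OF dG'])
  also have "\<dots> = (- al - 1) * phiN N (x, t) powr (- al - 2) *
        (4 * ((N *v x) \<bullet> x) * (N *v x) $ i + 4 * t * (Jmat *v x) $ i) *
        (4 * ((N *v x) \<bullet> x) * (N *v x) $ j + 4 * t * (Jmat *v x) $ j)
   + phiN N (x, t) powr (- al - 1) *
       (8 * (N *v x) $ i * (N *v x) $ j + 4 * ((N *v x) \<bullet> x) * (N *v axis i 1) $ j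
        + 8 * (Jmat *v x) $ i * (Jmat *v x) $ j + 4 * t * (Jmat *v axis i 1) $ j)"
    unfolding ax P0 U0 by (simp add: algebra_simps)
  finally show ?thesis .
qed



lemma tr_expand:
  fixes A H N :: "real^'m^'m"
  assumes "\<And>i j. H$j$i = c1 * (V$j * V$i) + c2 * (8*(a$j*a$i) + 4*u*N$j$i + 8*(b$j*b$i))"
  shows "trace (A ** H) = c1 * (V \<bullet> (A *v V)) + c2 * (8*(a \<bullet> (A *v a)) + 4*u*trace(A**N) + 8*(b \<bullet> (A *v b)))"
  by (simp add: assms trace_def matrix_matrix_mult_def inner_vec_def matrix_vector_mult_def
        sum.distrib sum_distrib_left distrib_left algebra_simps)

lemma mat_axis: "((A::real^'m^'m) *v axis i 1) $ j = A $ j $ i"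
  by (simp add: matrix_vector_mult_basis column_def)

lemma sym_entry: "transpose (A::real^'m^'m) = A \<Longrightarrow> A $ i $ j = A $ j $ i"
  by (metis transpose_def vec_lambda_beta)

lemma Hentry:
  fixes N :: "'n::finite hmat"
  assumes sym: "transpose N = N" and pos: "phiN N (x, t) > 0" and al: "al > 0"
  shows "hhess (gN al N) (x, t) $ j $ i =
     ((- al - 1) * phiN N (x, t) powr (- al - 2)) *
       (((4 * ((N *v x) \<bullet> x)) *\<^sub>R (N *v x) + (4 * t) *\<^sub>R (Jmat *v x))$j *
        ((4 * ((N *v x) \<bullet> x)) *\<^sub>R (N *v x) + (4 * t) *\<^sub>R (Jmat *v x))$i)
   + phiN N (x, t) powr (- al - 1) * (8*((N *v x)$j*(N *v x)$i) + 4*((N *v x) \<bullet> x)*N$j$i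
        + 8*((Jmat *v x)$j*(Jmat *v x)$i))"
proof -
  have "N $ j $ i = N $ i $ j" by (rule sym_entry[OF sym])
  moreover have "Jmat $ j $ i = - (Jmat $ i $ j::real)" using J_antisym[of j i] by simp
  ultimately show ?thesis
    unfolding hhess_def using X2[OF sym pos al, of i j] X2[OF sym pos al, of j i]
    by (simp add: mat_axis algebra_simps)
qed



lemma card_plus: "CARD('a::finite + 'b::finite) = CARD('a) + CARD('b)"
  unfolding UNIV_Plus_UNIV[symmetric] by (simp add: card_Plus del: UNIV_Plus_UNIV)

lemma norm_sum_sq: "norm (p + q :: 'a::real_inner) ^ 2 \<le> 2 * norm p ^ 2 + 2 * norm q ^ 2"
proof -
  have "norm (p + q) ^ 2 \<le> (norm p + norm q)^2"
    by (simp add: norm_triangle_ineq power_mono)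
  also have "\<dots> = 2 * norm p ^ 2 + 2 * norm q ^ 2 - (norm p - norm q)^2"
    by (simp add: power2_eq_square algebra_simps)
  also have "\<dots> \<le> 2 * norm p ^ 2 + 2 * norm q ^ 2" by simp
  finally show ?thesis .
qed

lemma quad_err:
  fixes E :: "real^'m^'m"
  assumes "\<forall>v. norm (E *v v) \<le> eta * norm v"
  shows "\<bar>v \<bullet> (E *v v)\<bar> \<le> eta * norm v ^ 2"
proof -
  have "\<bar>v \<bullet> (E *v v)\<bar> \<le> norm v * norm (E *v v)" by (rule Cauchy_Schwarz_ineq2)
  also have "\<dots> \<le> norm v * (eta * norm v)" using assms by (simp add: mult_left_mono)
  finally show ?thesis by (simp add: power2_eq_square algebra_simps)
qed

lemma trace_err:
  fixes E N M :: "real^'m^'m"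
  assumes E: "\<forall>v. norm (E *v v) \<le> eta * norm v" and eta: "eta \<ge> 0"
    and MN: "M ** N = mat 1" and lam: "lam > 0" and pM: "\<forall>v. lam * (v \<bullet> v) \<le> v \<bullet> (M *v v)"
  shows "\<bar>trace (E ** N)\<bar> \<le> real CARD('m) * (eta / lam)"
proof -
  have b: "\<bar>(E ** N) $ i $ i\<bar> \<le> eta / lam" for i
  proof -
    define w where "w = N *v axis i 1"
    have Mw: "M *v w = axis i 1" using MN by (simp add: w_def matrix_vector_mul_assoc)
    have "lam * (w \<bullet> w) \<le> w \<bullet> axis i 1" using pM Mw by metis
    also have "\<dots> \<le> norm w" using Cauchy_Schwarz_ineq2[of w "axis i 1"] by simp
    finally have "lam * norm w ^ 2 \<le> norm w" by (simp add: power2_norm_eq_inner)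
    hence nw: "norm w \<le> 1 / lam"
    proof (cases "norm w = 0")
      case False
      hence "norm w > 0" by simp
      moreover assume h: "lam * norm w ^ 2 \<le> norm w"
      ultimately have "lam * norm w \<le> 1"
        by (simp add: power2_eq_square)
      thus ?thesis using lam by (simp add: field_simps)
    qed (use lam in simp)
    have "(E ** N) $ i $ i = (E *v w) $ i"
      by (simp add: w_def matrix_vector_mul_assoc mat_axis)
    hence "\<bar>(E ** N) $ i $ i\<bar> \<le> norm (E *v w)" by (simp add: component_le_norm_cart)
    also have "\<dots> \<le> eta * norm w" using E by blast
    also have "\<dots> \<le> eta * (1/lam)" using nw eta using mult_left_mono[OF nw eta] by simp
    finally show ?thesis by simp
  qed
  have "\<bar>trace (E ** N)\<bar> \<le> (\<Sum>i\<in>UNIV. \<bar>(E ** N) $ i $ i\<bar>)"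
    unfolding trace_def by (rule sum_abs)
  also have "\<dots> \<le> (\<Sum>i\<in>(UNIV::'m set). eta / lam)" by (rule sum_mono) (rule b)
  finally show ?thesis by simp
qed



lemma matrix_add_rdistrib': "((A::real^'m^'m) + B) ** C = A ** C + B ** C"
  by (simp add: vec_eq_iff matrix_matrix_mult_def sum.distrib distrib_right)

definition Cconst :: "real \<Rightarrow> real \<Rightarrow> real \<Rightarrow> real \<Rightarrow> real" where
  "Cconst lam Lam al n = 32*(Lam^2/lam)*(al+1) + 16*(Lam^2/lam) + 8*n/lam"

lemma core:
  fixes M A :: "'n::finite hmat"
  assumes symM: "transpose M = M" and invM: "invertible M"
    and sp: "matrix_inv M = transpose Jmat ** M ** Jmat"
    and lamM: "\<forall>v. lam * (v \<bullet> v) \<le> v \<bullet> (M *v v)" and LamM: "\<forall>v. v \<bullet> (M *v v) \<le> Lam * (v \<bullet> v)"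
    and lam: "0 < lam" "lam \<le> 1" and Lam: "1 \<le> Lam"
    and E: "\<forall>v. norm ((A - M) *v v) \<le> eta * norm v" and eta: "0 \<le> eta"
    and etaC: "eta * Cconst lam Lam al (real CARD('n)) \<le> 16 * delta"
    and al: "al = real CARD('n) / 2 + delta" and delta: "0 < delta"
    and z: "(x, t) \<noteq> 0"
  shows "0 \<le> - trace (A ** hhess (gN al (matrix_inv M)) (x, t))"
proof -
  define N where "N = matrix_inv M"
  define a where "a = N *v x"
  define b where "b = Jmat *v x"
  define u where "u = a \<bullet> x"
  define ph where "ph = phiN N (x, t)"
  define EE where "EE = A - M"
  define K where "K = Lam^2 / lam"
  define V where "V = (4 * u) *\<^sub>R a + (4 * t) *\<^sub>R b"
  have alpos: "al > 0" using al delta by simp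
  have MN: "M ** N = mat 1" and NM: "N ** M = mat 1" using inv_props[OF invM] by (auto simp: N_def)
  have symN: "transpose N = N" unfolding N_def by (rule inv_sym[OF invM symM])
  have F1: "M *v a = x" by (simp add: a_def matrix_vector_mul_assoc MN)
  have I1: "a \<bullet> (M *v a) = u" by (simp add: F1 u_def)
  have F2: "lam * (a \<bullet> a) \<le> u" using lamM I1 by metis
  have aa0: "0 \<le> a \<bullet> a" by simp
  have u0: "0 \<le> u" using F2 lam aa0 by (smt (verit) mult_nonneg_nonneg)
  have posM: "\<forall>v. 0 \<le> v \<bullet> (M *v v)"
  proof
    fix v :: "real^('n+'n)"
    have "0 \<le> lam * (v \<bullet> v)" using lam by simp
    thus "0 \<le> v \<bullet> (M *v v)" using lamM by (meson order_trans)
  qed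
  have F3: "norm x \<le> Lam * norm a"
    using psd_norm_bound[OF symM posM LamM, of a] Lam F1 by simp
  have F5: "a \<bullet> a \<le> u / lam" using F2 lam by (simp add: field_simps)
  have Kge: "u / lam \<le> K * u"
  proof -
    have "1 \<le> Lam^2" using Lam by (simp add: one_le_power)
    hence "u * 1 \<le> u * Lam^2" using u0 by (rule mult_left_mono)
    thus ?thesis using lam by (simp add: K_def field_simps)
  qed
  have Fa: "norm a ^ 2 \<le> K * u" using F5 Kge by (simp add: power2_norm_eq_inner)
  have Fb: "norm b ^ 2 \<le> K * u"
  proof -
    have "norm b ^ 2 = norm x ^ 2" by (simp add: b_def J_norm)
    also have "\<dots> \<le> (Lam * norm a)^2" using F3 by (simp add: power_mono)
    also have "\<dots> = Lam^2 * (a \<bullet> a)" by (simp add: power_mult_distrib power2_norm_eq_inner)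
    also have "\<dots> \<le> Lam^2 * (u / lam)" using mult_left_mono[OF F5, of "Lam^2"] by simp
    finally show ?thesis by (simp add: K_def)
  qed
  have phdef: "ph = u^2 + t^2" by (simp add: ph_def phiN_def u_def a_def inner_commute)
  have phpos: "ph > 0"
  proof (cases "x = 0")
    case True
    hence "t \<noteq> 0" using z by (simp add: zero_prod_def)
    thus ?thesis using True by (simp add: phdef u_def)
  next
    case False
    hence "a \<noteq> 0" using F1 by auto
    hence "0 < a \<bullet> a" by simp
    hence "0 < u" using F2 lam by (smt (verit) mult_pos_pos)
    thus ?thesis by (simp add: phdef add_pos_nonneg)
  qed
  have I2: "b \<bullet> (M *v b) = u"
  proof -
    have "u = (N *v x) \<bullet> x" by (simp add: u_def a_def)
    also have "N *v x = transpose Jmat *v (M *v (Jmat *v x))"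
      using sp by (simp add: N_def matrix_vector_mul_assoc matrix_mul_assoc)
    also have "(transpose Jmat *v (M *v (Jmat *v x))) \<bullet> x = (M *v b) \<bullet> b"
      by (simp add: dot_lmul_matrix b_def)
    finally show ?thesis by (simp add: inner_commute)
  qed
  have I3: "a \<bullet> (M *v b) = 0" "b \<bullet> (M *v a) = 0"
    using sym_inner[OF symM, of a b] F1 J_orth[of x]
    by (simp_all add: b_def inner_commute)
  have trM: "trace (M ** N) = 2 * real CARD('n)"
    by (simp add: MN trace_I card_plus)
  have VMV: "V \<bullet> (M *v V) = 16 * u * ph"
    by (simp add: V_def matrix_vector_right_distrib matrix_vector_mult_scaleR inner_add_left inner_add_right
        I1 I2 I3 phdef power2_eq_square algebra_simps)
  have AM: "A = M + EE" by (simp add: EE_def)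
  have EEb: "\<forall>v. norm (EE *v v) \<le> eta * norm v" using E by (simp add: EE_def)
  define eV where "eV = V \<bullet> (EE *v V)"
  define ea where "ea = a \<bullet> (EE *v a)"
  define eb where "eb = b \<bullet> (EE *v b)"
  define eT where "eT = trace (EE ** N)"
  have eVb: "\<bar>eV\<bar> \<le> eta * (32 * K * u * ph)"
  proof -
    have "\<bar>eV\<bar> \<le> eta * norm V ^ 2" unfolding eV_def by (rule quad_err[OF EEb])
    also have "norm V ^ 2 \<le> 2 * norm ((4 * u) *\<^sub>R a) ^ 2 + 2 * norm ((4 * t) *\<^sub>R b) ^ 2"
      unfolding V_def by (rule norm_sum_sq)
    also have "\<dots> = 32 * (u^2 * norm a ^ 2) + 32 * (t^2 * norm b ^ 2)"
      by (simp add: power_mult_distrib power2_abs)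
    also have "\<dots> \<le> 32 * (u^2 * (K * u)) + 32 * (t^2 * (K * u))"
      using Fa Fb by (intro add_mono mult_left_mono) auto
    also have "\<dots> = 32 * K * u * ph" by (simp add: phdef algebra_simps)
    finally show ?thesis using eta by (simp add: mult_left_mono)
  qed
  have eab: "\<bar>ea\<bar> \<le> eta * (K * u)"
    using quad_err[OF EEb, of a] Fa eta unfolding ea_def by (meson mult_left_mono order_trans)
  have ebb: "\<bar>eb\<bar> \<le> eta * (K * u)"
    using quad_err[OF EEb, of b] Fb eta unfolding eb_def by (meson mult_left_mono order_trans)
  have eTb: "\<bar>eT\<bar> \<le> 2 * real CARD('n) * (eta / lam)"
    using trace_err[OF EEb eta MN lam(1) lamM] unfolding eT_def by (simp add: card_plus)
  have HE: "hhess (gN al N) (x, t) $ j $ i = ((- al - 1) * ph powr (- al - 2)) * (V$j * V$i)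
      + ph powr (- al - 1) * (8*(a$j*a$i) + 4*u*N$j$i + 8*(b$j*b$i))" for i j
    using Hentry[OF symN phpos[unfolded ph_def] alpos, of j i]
    by (simp add: ph_def V_def u_def a_def b_def)
  have tr: "trace (A ** hhess (gN al N) (x, t)) = ((- al - 1) * ph powr (- al - 2)) * (V \<bullet> (A *v V))
     + ph powr (- al - 1) * (8*(a \<bullet> (A *v a)) + 4*u*trace(A**N) + 8*(b \<bullet> (A *v b)))"
    by (rule tr_expand) (rule HE)
  define p where "p = ph powr (- al - 2)"
  have pp: "p > 0" using phpos by (simp add: p_def)
  have q: "ph powr (- al - 1) = ph * p"
  proof -
    have "ph powr (- al - 1) = ph powr (1 + (- al - 2))" by (rule arg_cong[where f="\<lambda>e. ph powr e"]) simp
    also have "\<dots> = ph powr 1 * ph powr (- al - 2)" by (rule powr_add)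
    finally show ?thesis using phpos by (simp add: p_def)
  qed
  have AV: "V \<bullet> (A *v V) = 16 * u * ph + eV" and Aa: "a \<bullet> (A *v a) = u + ea"
    and Ab: "b \<bullet> (A *v b) = u + eb" and AT: "trace (A ** N) = 2 * real CARD('n) + eT"
    by (simp_all add: AM eV_def ea_def eb_def eT_def matrix_vector_mult_add_rdistrib inner_add_right
          VMV I1 I2 matrix_add_rdistrib' trace_add trM)
  define B where "B = (al + 1) * (16 * u * ph + eV) - ph * (8 * (u + ea) + 4 * u * (2 * real CARD('n) + eT) + 8 * (u + eb))"
  have negtr: "- trace (A ** hhess (gN al N) (x, t)) = p * B"
    unfolding tr AV Aa Ab AT q B_def p_def by (simp add: algebra_simps)
  have Bsplit: "B = 16 * delta * u * ph + ((al + 1) * eV - ph * (8 * ea + 4 * u * eT + 8 * eb))"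
    unfolding B_def al by (simp add: algebra_simps)
  have ph0: "0 \<le> ph" using phpos by simp
  have err: "\<bar>(al + 1) * eV - ph * (8 * ea + 4 * u * eT + 8 * eb)\<bar> \<le> eta * Cconst lam Lam al (real CARD('n)) * (u * ph)"
  proof -
    have "\<bar>(al + 1) * eV - ph * (8 * ea + 4 * u * eT + 8 * eb)\<bar> \<le> (al + 1) * \<bar>eV\<bar> + ph * (8 * \<bar>ea\<bar> + 4 * u * \<bar>eT\<bar> + 8 * \<bar>eb\<bar>)"
    proof -
      have h1: "\<bar>(al+1)*eV\<bar> = (al+1)*\<bar>eV\<bar>" using alpos by (simp add: abs_mult)
      have h2: "\<bar>4*u*eT\<bar> = 4*u*\<bar>eT\<bar>" using u0 by (simp add: abs_mult)
      have h3: "\<bar>8 * ea + 4 * u * eT + 8 * eb\<bar> \<le> 8 * \<bar>ea\<bar> + 4 * u * \<bar>eT\<bar> + 8 * \<bar>eb\<bar>"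
        using h2 by (smt (verit) abs_mult abs_numeral)
      have h4: "\<bar>ph * (8 * ea + 4 * u * eT + 8 * eb)\<bar> \<le> ph * (8 * \<bar>ea\<bar> + 4 * u * \<bar>eT\<bar> + 8 * \<bar>eb\<bar>)"
        using h3 ph0 by (simp add: abs_mult mult_left_mono)
      show ?thesis using h1 h4 by (smt (verit) abs_triangle_ineq4)
    qed
    also have "\<dots> \<le> (al + 1) * (eta * (32 * K * u * ph)) + ph * (8 * (eta * (K * u)) + 4 * u * (2 * real CARD('n) * (eta / lam)) + 8 * (eta * (K * u)))"
      using alpos ph0 u0 eVb eab ebb eTb
      by (intro add_mono mult_left_mono order_refl) auto
    also have "\<dots> = eta * Cconst lam Lam al (real CARD('n)) * (u * ph)"
      by (simp add: Cconst_def K_def algebra_simps)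
    finally show ?thesis .
  qed
  have "eta * Cconst lam Lam al (real CARD('n)) * (u * ph) \<le> 16 * delta * (u * ph)"
    using etaC u0 ph0 by (simp add: mult_right_mono)
  hence "0 \<le> B" using err Bsplit by (simp add: algebra_simps) 
  thus ?thesis using negtr pp N_def by simp
qed



lemma mv_neg: "(B::real^'m^'k) *v (- y) = - (B *v y)"
  by (simp add: vec_eq_iff matrix_vector_mult_def sum_negf)

lemma powr4_lt:
  fixes y e :: real
  assumes "0 \<le> y" "y powr (1/4) < e"
  shows "y < e ^ 4"
proof (cases "y = 0")
  case True thus ?thesis using assms by simp
next
  case False
  hence yp: "y > 0" using assms by simp
  have "(y powr (1/4)) ^ 4 = y"
    using yp powr_power[of y "1/4" 4] by simp
  moreover have "(y powr (1/4)) ^ 4 < e ^ 4"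
    using assms by (intro power_strict_mono) auto
  ultimately show ?thesis by simp
qed

lemma hball_dist:
  fixes z z0 :: "'n::finite hpoint"
  assumes "z \<in> hball z0 e" "0 < e" "e \<le> 1"
  shows "dist z z0 \<le> e * (2 + 2 * norm (fst z0))"
proof -
  obtain x t where zz: "z = (x, t)" by (cases z)
  obtain x0 t0 where zz0: "z0 = (x0, t0)" by (cases z0)
  define X where "X = x - x0"
  define S where "S = t - t0 - 2 * ((Jmat *v x0) \<bullet> x)"
  have Jm: "Jmat *v (- x0) = - (Jmat *v x0)" by (simp add: mv_neg)
  have hm: "hmult (hinv z0) z = (X, S)"
    unfolding hmult_def hinv_def zz zz0 X_def S_def fst_conv snd_conv Jm
    by (simp add: inner_minus_left)
  have "hdist z0 z < e" using assms(1) by (simp add: hball_def)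
  hence "hgauge (X, S) < e" by (simp only: hdist_def hm)
  hence g: "(norm X ^ 4 + S^2) powr (1/4) < e" by (simp only: hgauge_def fst_conv snd_conv)
  have lt: "norm X ^ 4 + S^2 < e ^ 4" by (rule powr4_lt[OF _ g]) simp
  have "norm X ^ 4 \<le> norm X ^ 4 + S^2" by simp
  hence "norm X ^ 4 < e ^ 4" using lt by linarith
  hence nX: "norm X < e" using power_less_imp_less_base[of "norm X" 4 e] assms(2) by simp
  have "S^2 \<le> norm X ^ 4 + S^2" by simp
  moreover have "(e^2)^2 = e ^ 4" by (metis power_mult num_double numeral_times_numeral)
  ultimately have "\<bar>S\<bar>^2 < (e^2)^2" using lt by (simp only: power2_abs)
  hence "\<bar>S\<bar> < e^2" by (rule power2_less_imp_less) simp
  moreover have "e^2 \<le> e" using assms by (simp add: power2_eq_square mult_left_le)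
  ultimately have aS: "\<bar>S\<bar> \<le> e" by simp
  have "(Jmat *v x0) \<bullet> x = (Jmat *v x0) \<bullet> X"
    using J_orth[of x0] by (simp add: X_def inner_diff_right inner_commute)
  hence "\<bar>(Jmat *v x0) \<bullet> x\<bar> \<le> norm x0 * norm X"
    using Cauchy_Schwarz_ineq2[of "Jmat *v x0" X] by (simp add: J_norm)
  also have "\<dots> \<le> norm x0 * e" using nX by (simp add: mult_left_mono)
  finally have aJ: "\<bar>(Jmat *v x0) \<bullet> x\<bar> \<le> norm x0 * e" .
  have "\<bar>t - t0\<bar> \<le> e + 2 * (norm x0 * e)" using aS aJ unfolding S_def by linarith
  have "dist z z0 = norm (X, t - t0)" by (simp add: dist_norm zz zz0 X_def)
  also have "\<dots> \<le> norm X + norm (t - t0)" by (rule norm_Pair_le)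
  also have "\<dots> \<le> e + (e + 2 * (norm x0 * e))"
    using nX \<open>\<bar>t - t0\<bar> \<le> e + 2 * (norm x0 * e)\<close> by simp
  finally show ?thesis by (simp add: zz0 algebra_simps)
qed

lemma onorm_mat_le:
  fixes X :: "real^'m^'m"
  shows "onorm (\<lambda>v. X *v v) \<le> real (CARD('m)) * real (CARD('m)) * norm X"
proof -
  have "\<bar>X $ i $ j\<bar> \<le> norm X" for i j
  proof -
    have "\<bar>X $ i $ j\<bar> \<le> norm (X $ i)" by (rule component_le_norm_cart)
    also have "\<dots> \<le> norm X" unfolding norm_vec_def[of X] by (rule member_le_L2_set) simp_all
    finally show ?thesis .
  qed
  hence "onorm ((*v) X) \<le> real (CARD('m)) * real (CARD('m)) * norm X"
    by (rule onorm_le_matrix_component)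
  thus ?thesis by simp
qed

lemma Mclass_bound:
  assumes "Mclass lam Lam \<Omega> A" "z \<in> \<Omega>" "0 < lam" "1 \<le> Lam"
  shows "norm (A z *v v) \<le> Lam * norm v"
proof -
  have s: "transpose (A z) = A z" and q: "\<forall>v. lam * (v \<bullet> v) \<le> v \<bullet> (A z *v v) \<and> v \<bullet> (A z *v v) \<le> Lam * (v \<bullet> v)"
    using assms(1,2) by (auto simp: Mclass_def)
  have p: "\<forall>v. 0 \<le> v \<bullet> (A z *v v)"
  proof
    fix v :: "real^('a+'a)"
    have "0 \<le> lam * (v \<bullet> v)" using assms(3) by simp
    thus "0 \<le> v \<bullet> (A z *v v)" using q by (meson order_trans)
  qed
  show ?thesis by (rule psd_norm_bound[OF s p]) (use q assms(4) in auto)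
qed

lemma onorm_diff_bound:
  assumes "Mclass lam Lam \<Omega> A" "z \<in> \<Omega>" "z0 \<in> \<Omega>" "0 < lam" "1 \<le> Lam"
  shows "onorm (\<lambda>v. (A z - A z0) *v v) \<le> 2 * Lam"
proof (rule onorm_le)
  fix v
  have "norm ((A z - A z0) *v v) = norm (A z *v v - A z0 *v v)"
    by (simp add: matrix_vector_mult_diff_rdistrib)
  also have "\<dots> \<le> norm (A z *v v) + norm (A z0 *v v)" by (rule norm_triangle_ineq4)
  also have "\<dots> \<le> Lam * norm v + Lam * norm v"
    using Mclass_bound[OF assms(1,2,4,5)] Mclass_bound[OF assms(1,3,4,5)] by (intro add_mono) auto
  finally show "norm ((A z - A z0) *v v) \<le> 2 * Lam * norm v" by simp
qed

lemma z0_in_hball: "0 < e \<Longrightarrow> z0 \<in> hball z0 e"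
  by (simp add: hball_def hdist_def hgauge_def hmult_def hinv_def mv_neg
      inner_commute J_orth)

lemma modcont_upper:
  assumes "Mclass lam Lam \<Omega> A" "z0 \<in> \<Omega>" "z \<in> hball z0 e \<inter> \<Omega>" "0 < lam" "1 \<le> Lam"
  shows "onorm (\<lambda>v. (A z - A z0) *v v) \<le> modcont A \<Omega> z0 e"
  unfolding modcont_def
proof (rule cSUP_upper[OF assms(3)])
  show "bdd_above ((\<lambda>z. onorm (\<lambda>v. (A z - A z0) *v v)) ` (hball z0 e \<inter> \<Omega>))"
    using onorm_diff_bound[OF assms(1) _ assms(2,4,5)] by (intro bdd_aboveI2[where M="2*Lam"]) auto
qed

lemma modcont_small:
  fixes A :: "'n::finite hpoint \<Rightarrow> 'n hmat"
  assumes "continuous (at z0 within \<Omega>) A" "z0 \<in> \<Omega>" "0 < eta"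
  shows "\<exists>e>0. modcont A \<Omega> z0 e \<le> eta"
proof -
  define c where "c = real (CARD('n+'n)) * real (CARD('n+'n))"
  have cpos: "c > 0" by (simp add: c_def)
  obtain d where d: "d > 0" "\<forall>z\<in>\<Omega>. dist z z0 < d \<longrightarrow> dist (A z) (A z0) < eta / c"
    using assms(1) cpos assms(3) unfolding continuous_within_eps_delta by (meson divide_pos_pos)
  define K where "K = 2 + 2 * norm (fst z0)"
  have Kp: "K > 0" by (simp add: K_def add_pos_nonneg)
  define e where "e = min (1/2) (d / (2 * K))"
  have ep: "e > 0" using d Kp by (simp add: e_def)
  have e1: "e \<le> 1" by (simp add: e_def)
  have "modcont A \<Omega> z0 e \<le> eta"
    unfolding modcont_def
  proof (rule cSUP_least)
    show "hball z0 e \<inter> \<Omega> \<noteq> {}" using z0_in_hball[OF ep] assms(2) by blast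
  next
    fix z assume z: "z \<in> hball z0 e \<inter> \<Omega>"
    have "dist z z0 \<le> e * K" using hball_dist[of z z0 e] z ep e1 by (simp add: K_def)
    also have "\<dots> \<le> d / (2 * K) * K" using Kp by (intro mult_right_mono) (auto simp: e_def)
    also have "\<dots> < d" using Kp d by (simp add: field_simps)
    finally have "dist (A z) (A z0) < eta / c" using d z by blast
    hence "norm (A z - A z0) < eta / c" by (simp add: dist_norm)
    hence "c * norm (A z - A z0) \<le> eta" using cpos by (simp add: field_simps)
    moreover have "onorm (\<lambda>v. (A z - A z0) *v v) \<le> c * norm (A z - A z0)"
      unfolding c_def by (rule onorm_mat_le)
    ultimately show "onorm (\<lambda>v. (A z - A z0) *v v) \<le> eta" by linarith
  qed
  thus ?thesis using ep by blast
qed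



lemma final_pt:
  fixes A :: "'n::finite hpoint \<Rightarrow> 'n hmat"
  assumes MC: "Mclass lam Lam \<Omega> A" and z0: "z0 \<in> \<Omega>" and sp: "symplectic (A z0)" and z: "z \<in> \<Omega>"
    and lam: "0 < lam" "lam \<le> 1" and Lam: "1 \<le> Lam" and delta: "0 < delta"
    and on: "onorm (\<lambda>v. (A z - A z0) *v v) \<le> 16 * delta / Cconst lam Lam (real CARD('n) / 2 + delta) (real CARD('n))"
    and zeta: "\<zeta> \<noteq> 0"
  shows "0 \<le> - trace (A z ** hhess (\<lambda>\<zeta>. - (1 / ((Qdim TYPE('n) - 2) / 4 + delta)) *
            phiM (A z0) \<zeta> powr (- ((Qdim TYPE('n) - 2) / 4 + delta))) \<zeta>)"
proof -
  define al where "al = real CARD('n) / 2 + delta"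
  have alq: "(Qdim TYPE('n) - 2) / 4 + delta = al" by (simp add: Qdim_def al_def)
  have geq: "(\<lambda>\<zeta>. - (1 / al) * phiM (A z0) \<zeta> powr (- al)) = gN al (matrix_inv (A z0))"
    by (simp add: fun_eq_iff gN_def phiN_def phiM_def)
  define C where "C = Cconst lam Lam al (real CARD('n))"
  have Cp: "C > 0" using lam Lam delta by (simp add: C_def Cconst_def al_def add_pos_nonneg)
  define eta where "eta = 16 * delta / C"
  have eta0: "0 \<le> eta" using Cp delta by (simp add: eta_def)
  have etaC: "eta * C \<le> 16 * delta" using Cp by (simp add: eta_def)
  have E: "\<forall>v. norm ((A z - A z0) *v v) \<le> eta * norm v"
  proof
    fix v
    have "norm ((A z - A z0) *v v) \<le> onorm (\<lambda>v. (A z - A z0) *v v) * norm v"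
      by (rule onorm) simp
    also have "\<dots> \<le> eta * norm v"
      using mult_right_mono[OF on norm_ge_zero[of v]] by (simp add: eta_def C_def al_def)
    finally show "norm ((A z - A z0) *v v) \<le> eta * norm v" .
  qed
  have symM: "transpose (A z0) = A z0" and lamM: "\<forall>v. lam * (v \<bullet> v) \<le> v \<bullet> (A z0 *v v)"
    and LamM: "\<forall>v. v \<bullet> (A z0 *v v) \<le> Lam * (v \<bullet> v)"
    using MC z0 by (auto simp: Mclass_def)
  have invM: "invertible (A z0)" and spM: "matrix_inv (A z0) = transpose Jmat ** A z0 ** Jmat"
    using sp by (auto simp: symplectic_def)
  obtain x t where zt: "\<zeta> = (x, t)" by (cases \<zeta>)
  have "0 \<le> - trace (A z ** hhess (gN al (matrix_inv (A z0))) (x, t))"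
    by (rule core[OF symM invM spM lamM LamM lam Lam E eta0 etaC[unfolded C_def] al_def delta])
       (use zeta zt in simp)
  thus ?thesis unfolding alq geq zt .
qed

theorem lemma3p6:
  fixes lam Lam delta :: real
  assumes "0 < delta" "delta < 1/2" "0 < lam" "lam \<le> 1" "1 \<le> Lam"
  shows
   "(\<forall>w :: real \<Rightarrow> real. \<exists>eps0 > 0. \<forall>(\<Omega> :: 'n::finite hpoint set) A z0.
       open \<Omega> \<and> z0 \<in> \<Omega> \<and> Mclass lam Lam \<Omega> A \<and> continuous (at z0 within \<Omega>) A
       \<and> symplectic (A z0) \<and> (\<forall>e>0. modcont A \<Omega> z0 e = w e) \<longrightarrow>
       (let alpha = (Qdim TYPE('n) - 2) / 4 + delta;
            g = (\<lambda>\<zeta>. - (1 / alpha) * phiM (A z0) \<zeta> powr (- alpha))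
        in \<forall>z \<in> hball z0 eps0 \<inter> \<Omega>. \<forall>\<zeta>. \<zeta> \<noteq> 0 \<longrightarrow> - trace (A z ** hhess g \<zeta>) \<ge> 0))
  \<and> (\<forall>w :: real \<Rightarrow> real. admissible_modulus w \<longrightarrow> (\<exists>eps0 > 0. \<forall>(\<Omega> :: 'n hpoint set) A z0.
       open \<Omega> \<and> z0 \<in> \<Omega> \<and> Mclass lam Lam \<Omega> A \<and> Cclass \<Omega> w A
       \<and> symplectic (A z0) \<longrightarrow>
       (let alpha = (Qdim TYPE('n) - 2) / 4 + delta;
            g = (\<lambda>\<zeta>. - (1 / alpha) * phiM (A z0) \<zeta> powr (- alpha))
        in \<forall>z \<in> hball z0 eps0 \<inter> \<Omega>. \<forall>\<zeta>. \<zeta> \<noteq> 0 \<longrightarrow> - trace (A z ** hhess g \<zeta>) \<ge> 0)))"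
proof -
  define et where "et = 16 * delta / Cconst lam Lam (real CARD('n) / 2 + delta) (real CARD('n))"
  have etp: "et > 0" using assms by (simp add: et_def Cconst_def add_pos_nonneg)
  have P1: "\<exists>eps0 > 0. \<forall>(\<Omega> :: 'n::finite hpoint set) A z0.
       open \<Omega> \<and> z0 \<in> \<Omega> \<and> Mclass lam Lam \<Omega> A \<and> continuous (at z0 within \<Omega>) A
       \<and> symplectic (A z0) \<and> (\<forall>e>0. modcont A \<Omega> z0 e = w e) \<longrightarrow>
       (let alpha = (Qdim TYPE('n) - 2) / 4 + delta;
            g = (\<lambda>\<zeta>. - (1 / alpha) * phiM (A z0) \<zeta> powr (- alpha))
        in \<forall>z \<in> hball z0 eps0 \<inter> \<Omega>. \<forall>\<zeta>. \<zeta> \<noteq> 0 \<longrightarrow> - trace (A z ** hhess g \<zeta>) \<ge> 0)" for w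
  proof (cases "\<exists>e>0. w e \<le> et")
    case True
    then obtain e where e: "e > 0" "w e \<le> et" by blast
    show ?thesis
    proof (intro exI[of _ e] conjI allI impI)
      show "e > 0" by fact
    next
      fix \<Omega> :: "'n hpoint set" and A z0
      assume h: "open \<Omega> \<and> z0 \<in> \<Omega> \<and> Mclass lam Lam \<Omega> A \<and> continuous (at z0 within \<Omega>) A
       \<and> symplectic (A z0) \<and> (\<forall>e>0. modcont A \<Omega> z0 e = w e)"
      show "let alpha = (Qdim TYPE('n) - 2) / 4 + delta;
            g = (\<lambda>\<zeta>. - (1 / alpha) * phiM (A z0) \<zeta> powr (- alpha))
        in \<forall>z \<in> hball z0 e \<inter> \<Omega>. \<forall>\<zeta>. \<zeta> \<noteq> 0 \<longrightarrow> - trace (A z ** hhess g \<zeta>) \<ge> 0"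
        unfolding Let_def
      proof (intro ballI allI impI)
        fix z \<zeta> :: "'n hpoint"
        assume z: "z \<in> hball z0 e \<inter> \<Omega>" and zeta: "\<zeta> \<noteq> 0"
        have "onorm (\<lambda>v. (A z - A z0) *v v) \<le> modcont A \<Omega> z0 e"
          using modcont_upper[of lam Lam \<Omega> A z0 z e] h z assms by blast
        also have "\<dots> = w e" using h e by blast
        finally have on: "onorm (\<lambda>v. (A z - A z0) *v v) \<le> et" using e by linarith
        show "0 \<le> - trace (A z ** hhess (\<lambda>\<zeta>. - (1 / ((Qdim TYPE('n) - 2) / 4 + delta)) *
            phiM (A z0) \<zeta> powr (- ((Qdim TYPE('n) - 2) / 4 + delta))) \<zeta>)"
          using final_pt[of lam Lam \<Omega> A z0 z delta \<zeta>] h z assms on zeta unfolding et_def by blast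
      qed
    qed
  next
    case False
    show ?thesis
    proof (intro exI[of _ 1] conjI allI impI)
      fix \<Omega> :: "'n hpoint set" and A z0
      assume h: "open \<Omega> \<and> z0 \<in> \<Omega> \<and> Mclass lam Lam \<Omega> A \<and> continuous (at z0 within \<Omega>) A
       \<and> symplectic (A z0) \<and> (\<forall>e>0. modcont A \<Omega> z0 e = w e)"
      then obtain e where "e > 0" "modcont A \<Omega> z0 e \<le> et"
        using modcont_small[of z0 \<Omega> A et] etp by blast
      hence False using h False by auto
      thus "let alpha = (Qdim TYPE('n) - 2) / 4 + delta;
            g = (\<lambda>\<zeta>. - (1 / alpha) * phiM (A z0) \<zeta> powr (- alpha))
        in \<forall>z \<in> hball z0 1 \<inter> \<Omega>. \<forall>\<zeta>. \<zeta> \<noteq> 0 \<longrightarrow> - trace (A z ** hhess g \<zeta>) \<ge> 0" ..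
    qed simp
  qed
  have P2: "\<exists>eps0 > 0. \<forall>(\<Omega> :: 'n hpoint set) A z0.
       open \<Omega> \<and> z0 \<in> \<Omega> \<and> Mclass lam Lam \<Omega> A \<and> Cclass \<Omega> w A
       \<and> symplectic (A z0) \<longrightarrow>
       (let alpha = (Qdim TYPE('n) - 2) / 4 + delta;
            g = (\<lambda>\<zeta>. - (1 / alpha) * phiM (A z0) \<zeta> powr (- alpha))
        in \<forall>z \<in> hball z0 eps0 \<inter> \<Omega>. \<forall>\<zeta>. \<zeta> \<noteq> 0 \<longrightarrow> - trace (A z ** hhess g \<zeta>) \<ge> 0)"
    if adm: "admissible_modulus w" for w
  proof -
    have "(w \<longlongrightarrow> 0) (at_right 0)" using adm by (simp add: admissible_modulus_def)
    hence "eventually (\<lambda>e. w e < et) (at_right 0)" using etp by (rule order_tendstoD)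
    then obtain b where b: "b > 0" "\<forall>y>0. y < b \<longrightarrow> w y < et"
      by (auto simp: eventually_at_right_field)
    define e where "e = min (b/2) (1/2)"
    have e: "0 < e" "e < 1" "w e < et" using b by (auto simp: e_def)
    show ?thesis
    proof (intro exI[of _ e] conjI allI impI)
      show "e > 0" by fact
    next
      fix \<Omega> :: "'n hpoint set" and A z0
      assume h: "open \<Omega> \<and> z0 \<in> \<Omega> \<and> Mclass lam Lam \<Omega> A \<and> Cclass \<Omega> w A \<and> symplectic (A z0)"
      show "let alpha = (Qdim TYPE('n) - 2) / 4 + delta;
            g = (\<lambda>\<zeta>. - (1 / alpha) * phiM (A z0) \<zeta> powr (- alpha))
        in \<forall>z \<in> hball z0 e \<inter> \<Omega>. \<forall>\<zeta>. \<zeta> \<noteq> 0 \<longrightarrow> - trace (A z ** hhess g \<zeta>) \<ge> 0"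
        unfolding Let_def
      proof (intro ballI allI impI)
        fix z \<zeta> :: "'n hpoint"
        assume z: "z \<in> hball z0 e \<inter> \<Omega>" and zeta: "\<zeta> \<noteq> 0"
        have "onorm (\<lambda>v. (A z - A z0) *v v) \<le> modcont A \<Omega> z0 e"
          using modcont_upper[of lam Lam \<Omega> A z0 z e] h z assms by blast
        also have "\<dots> \<le> w e" using h e by (auto simp: Cclass_def)
        finally have on: "onorm (\<lambda>v. (A z - A z0) *v v) \<le> et" using e by linarith
        show "0 \<le> - trace (A z ** hhess (\<lambda>\<zeta>. - (1 / ((Qdim TYPE('n) - 2) / 4 + delta)) *
            phiM (A z0) \<zeta> powr (- ((Qdim TYPE('n) - 2) / 4 + delta))) \<zeta>)"
          using final_pt[of lam Lam \<Omega> A z0 z delta \<zeta>] h z assms on zeta unfolding et_def by blast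
      qed
    qed
  qed
  show ?thesis using P1 P2 by blast
qed

end
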